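(* Let $\bm A\in\mathbb R^{m\times n}$, let $\bm D\in\mathbb R^{n\times d}$ with $\bm D\bm D^\top=\bm I_n$, let $0<\alpha\le1$, $\lambda>0$, and let $\bm b=\bm A\bm x+\bm e$ with $\bm x\in\mathbb R^n$ and $\|\bm e\|_2\le\lambda$. Let $t$ be a positive integer and let $T\subseteq\{1,\dots,d\}$ be an index set of $t$ largest-magnitude entries of $\bm D^\top\bm x$. Let $\hat{\bm x}$ be a minimizer of $$\min_{\bm x\in\mathbb R^n}\ \lambda\big(\|\bm D^\top\bm x\|_1-\alpha\|\bm D^\top\bm x\|_2\big)+\tfrac12\|\bm A\bm x-\bm b\|_2^2,$$ and set $\bm h=\hat{\bm x}-\bm x$. Then $$\|\bm A\bm h\|_2^2+2\lambda\|\bm D_{T^c}^\top\bm h\|_1\le2\lambda\big(\|\bm D_T^\top\bm h\|_1+\alpha\|\bm D^\top\bm h\|_2+2\|\bm D_{T^c}^\top\bm x\|_1+\|\bm A\bm h\|_2\big),$$ $$\|\bm A\bm h\|_2^2+2\lambda\big(\|\bm D_{T^c}^\top\bm h\|_1-\alpha\|\bm D_{T^c}^\top\bm h\|_2\big)\le2\lambda\big(\|\bm D_T^\top\bm h\|_1+2\|\bm D_{T^c}^\top\bm x\|_1+\alpha\|\bm D_T^\top\bm h\|_2+\|\bm A\bm h\|_2\big),$$ $$\|\bm D_{T^c}^\top\bm h\|_1\le\|\bm D_T^\top\bm h\|_1+2\|\bm D_{T^c}^\top\bm x\|_1+\alpha\|\bm D^\top\bm h\|_2+\|\bm A\bm h\|_2,$$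 and $$\|\bm A\bm h\|_2^2\le2\lambda\big(\|\bm D_T^\top\bm h\|_1+2\|\bm D_{T^c}^\top\bm x\|_1+\alpha\|\bm D^\top\bm h\|_2+\|\bm A\bm h\|_2\big).$$
   Context: For an index set $S\subseteq\{1,\dots,d\}$, $S^c$ is its complement in $\{1,\dots,d\}$ and $\bm D_S$ denotes the matrix $\bm D$ with all columns not indexed by $S$ set to zero; thus $\bm D_S^\top\bm h$ is the vector $\bm D^\top\bm h$ with the entries outside $S$ set to zero. *)

theory Defs
  imports "HOL-Analysis.Analysis"
begin

definition l1norm :: "real ^ 'd \<Rightarrow> real" where
  "l1norm v = (\<Sum>i\<in>UNIV. \<bar>v $ i\<bar>)"

text \<open>Restriction of a vector to an index set S: entries outside S are set to zero.
  restrict_vec S (transpose D *v h) is D_S^T h.\<close>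
definition restrict_vec :: "'d set \<Rightarrow> real ^ 'd \<Rightarrow> real ^ 'd" where
  "restrict_vec S v = (\<chi> i. if i \<in> S then v $ i else 0)"

definition obj :: "real \<Rightarrow> real \<Rightarrow> real ^ 'n ^ 'm \<Rightarrow> real ^ 'd ^ 'n \<Rightarrow> real ^ 'm \<Rightarrow> real ^ 'n \<Rightarrow> real" where
  "obj lam alpha A D b z =
     lam * (l1norm (transpose D *v z) - alpha * norm (transpose D *v z)) + (1/2) * (norm (A *v z - b))\<^sup>2"

end

theory Submission
  imports Defs
begin

theorem lemma2:
  fixes A :: "real ^ 'n ^ 'm" and D :: "real ^ 'd ^ 'n"
    and x xhat :: "real ^ 'n" and e b :: "real ^ 'm"
    and alpha lam :: real and t :: nat and T :: "'d set"
  assumes DDt: "D ** transpose D = mat 1"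
    and alpha: "0 < alpha" "alpha \<le> 1"
    and lam: "lam > 0"
    and b: "b = A *v x + e"
    and e: "norm e \<le> lam"
    and t: "t > 0"
    and T_card: "card T = t"
    and T_largest: "\<forall>i\<in>T. \<forall>j\<in>- T. \<bar>(transpose D *v x) $ j\<bar> \<le> \<bar>(transpose D *v x) $ i\<bar>"
    and min: "\<forall>z. obj lam alpha A D b xhat \<le> obj lam alpha A D b z"
  defines "h \<equiv> xhat - x"
  shows
    "(norm (A *v h))\<^sup>2 + 2 * lam * l1norm (restrict_vec (- T) (transpose D *v h))
       \<le> 2 * lam * (l1norm (restrict_vec T (transpose D *v h)) + alpha * norm (transpose D *v h)
          + 2 * l1norm (restrict_vec (- T) (transpose D *v x)) + norm (A *v h))
   \<and> (norm (A *v h))\<^sup>2 + 2 * lam * (l1norm (restrict_vec (- T) (transpose D *v h))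
          - alpha * norm (restrict_vec (- T) (transpose D *v h)))
       \<le> 2 * lam * (l1norm (restrict_vec T (transpose D *v h))
          + 2 * l1norm (restrict_vec (- T) (transpose D *v x))
          + alpha * norm (restrict_vec T (transpose D *v h)) + norm (A *v h))
   \<and> l1norm (restrict_vec (- T) (transpose D *v h))
       \<le> l1norm (restrict_vec T (transpose D *v h)) + 2 * l1norm (restrict_vec (- T) (transpose D *v x))
          + alpha * norm (transpose D *v h) + norm (A *v h)
   \<and> (norm (A *v h))\<^sup>2
       \<le> 2 * lam * (l1norm (restrict_vec T (transpose D *v h)) + 2 * l1norm (restrict_vec (- T) (transpose D *v x))
          + alpha * norm (transpose D *v h) + norm (A *v h))"
proof -
  define u where "u = transpose D *v x"
  define v where "v = transpose D *v h"
  have xh: "xhat = x + h" unfolding h_def by simp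
  have uv: "transpose D *v xhat = u + v" unfolding xh u_def v_def by (simp add: matrix_vector_right_distrib)
  have res1: "A *v xhat - b = A *v h - e" unfolding xh b by (simp add: matrix_vector_right_distrib)
  have res2: "A *v x - b = - e" unfolding b by simp
  have m: "obj lam alpha A D b xhat \<le> obj lam alpha A D b x" using min by blast
  hence m2: "lam * (l1norm (u+v) - alpha * norm (u+v)) + (1/2) * (norm (A *v h - e))\<^sup>2
      \<le> lam * (l1norm u - alpha * norm u) + (1/2) * (norm e)\<^sup>2"
    unfolding obj_def uv res1 u_def[symmetric] res2 by simp
  have sq: "(norm (A *v h - e))\<^sup>2 = (norm (A *v h))\<^sup>2 - 2 * ((A *v h) \<bullet> e) + (norm e)\<^sup>2"
    by (simp add: power2_norm_eq_inner inner_diff_left inner_diff_right inner_commute)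
  have ip: "(A *v h) \<bullet> e \<le> lam * norm (A *v h)"
  proof -
    have "(A *v h) \<bullet> e \<le> norm (A *v h) * norm e" by (rule norm_cauchy_schwarz)
    also have "\<dots> \<le> norm (A *v h) * lam" using e by (simp add: mult_left_mono)
    finally show ?thesis by (simp add: mult.commute)
  qed
  have tri: "norm (u+v) - norm u \<le> norm v" using norm_triangle_ineq[of u v] by simp
  have coord: "\<And>i. \<bar>u$i\<bar> - \<bar>(u+v)$i\<bar> \<le> (if i \<in> T then \<bar>v$i\<bar> else 0) - (if i \<in> -T then \<bar>v$i\<bar> else 0)
      + 2 * (if i \<in> -T then \<bar>u$i\<bar> else 0)" by auto
  have l1: "l1norm u - l1norm (u+v) \<le> l1norm (restrict_vec T v) - l1norm (restrict_vec (-T) v) + 2 * l1norm (restrict_vec (-T) u)"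
  proof -
    have "l1norm u - l1norm (u+v) = (\<Sum>i\<in>UNIV. \<bar>u$i\<bar> - \<bar>(u+v)$i\<bar>)"
      unfolding l1norm_def by (simp add: sum_subtractf)
    also have "\<dots> \<le> (\<Sum>i\<in>UNIV. (if i \<in> T then \<bar>v$i\<bar> else 0) - (if i \<in> -T then \<bar>v$i\<bar> else 0)
      + 2 * (if i \<in> -T then \<bar>u$i\<bar> else 0))" by (rule sum_mono) (rule coord)
    also have "\<dots> = l1norm (restrict_vec T v) - l1norm (restrict_vec (-T) v) + 2 * l1norm (restrict_vec (-T) u)"
      unfolding l1norm_def restrict_vec_def
      by (simp only: sum.distrib sum_subtractf sum_distrib_left vec_lambda_beta if_distrib[of abs] abs_zero mult_zero_right)
    finally show ?thesis .
  qed
  have vs: "v = restrict_vec T v + restrict_vec (-T) v"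
    unfolding restrict_vec_def by (simp add: vec_eq_iff)
  have vn: "norm v \<le> norm (restrict_vec T v) + norm (restrict_vec (-T) v)"
    using norm_triangle_ineq[of "restrict_vec T v" "restrict_vec (-T) v"] vs by simp
  have nn1: "l1norm (restrict_vec (-T) v) \<ge> 0" unfolding l1norm_def by (simp add: sum_nonneg)
  have key: "(norm (A *v h))\<^sup>2 \<le> 2 * lam * norm (A *v h) + 2 * lam * (l1norm u - l1norm (u+v)) + 2 * lam * alpha * norm v"
  proof -
    have "lam * alpha * (norm (u+v) - norm u) \<le> lam * alpha * norm v"
      using tri lam alpha by (simp add: mult_left_mono)
    thus ?thesis using m2 sq ip by (simp add: algebra_simps)
  qed
  have I1: "(norm (A *v h))\<^sup>2 + 2 * lam * l1norm (restrict_vec (- T) v)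
       \<le> 2 * lam * (l1norm (restrict_vec T v) + alpha * norm v + 2 * l1norm (restrict_vec (- T) u) + norm (A *v h))"
  proof -
    have "2 * lam * (l1norm u - l1norm (u+v)) \<le> 2 * lam * (l1norm (restrict_vec T v) - l1norm (restrict_vec (-T) v) + 2 * l1norm (restrict_vec (-T) u))"
      using l1 lam by (simp add: mult_left_mono)
    thus ?thesis using key by (simp add: algebra_simps)
  qed
  have I2: "(norm (A *v h))\<^sup>2 + 2 * lam * (l1norm (restrict_vec (- T) v) - alpha * norm (restrict_vec (- T) v))
       \<le> 2 * lam * (l1norm (restrict_vec T v) + 2 * l1norm (restrict_vec (- T) u) + alpha * norm (restrict_vec T v) + norm (A *v h))"
  proof -
    have "2 * lam * alpha * norm v \<le> 2 * lam * alpha * (norm (restrict_vec T v) + norm (restrict_vec (-T) v))"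
      using vn lam alpha by (simp add: mult_left_mono)
    thus ?thesis using I1 by (simp add: algebra_simps)
  qed
  have I3: "l1norm (restrict_vec (- T) v) \<le> l1norm (restrict_vec T v) + 2 * l1norm (restrict_vec (- T) u) + alpha * norm v + norm (A *v h)"
  proof -
    have "2 * lam * l1norm (restrict_vec (- T) v) \<le> 2 * lam * (l1norm (restrict_vec T v) + 2 * l1norm (restrict_vec (- T) u) + alpha * norm v + norm (A *v h))"
    proof -
      have "2 * lam * (l1norm (restrict_vec T v) + 2 * l1norm (restrict_vec (- T) u) + alpha * norm v + norm (A *v h))
         = 2 * lam * (l1norm (restrict_vec T v) + alpha * norm v + 2 * l1norm (restrict_vec (- T) u) + norm (A *v h))"
        by (simp add: algebra_simps)
      thus ?thesis using I1 zero_le_power2[of "norm (A *v h)"] by linarith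
    qed
    thus ?thesis using lam by simp
  qed
  have I4: "(norm (A *v h))\<^sup>2 \<le> 2 * lam * (l1norm (restrict_vec T v) + 2 * l1norm (restrict_vec (- T) u) + alpha * norm v + norm (A *v h))"
    using I1 nn1 lam by (smt (verit) mult_nonneg_nonneg)
  show ?thesis using I1 I2 I3 I4 unfolding u_def v_def by (simp add: algebra_simps)
qed

end
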